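(* Let $x\in\mathbb{R}^N$, $\eta_x>0$, and let $\phi:\mathbb{R}^N\to\mathbb{R}$ satisfy $\phi\in C^2(\bar B_{\eta_x}(x))$ with $p_x=\nabla\phi(x)\neq0$. Then for every $\epsilon\in(0,\eta_x)$ with $\epsilon|\nabla^2\phi(x)|\le|p_x|$: $$\Big|c_s s\,\epsilon^{-2s}\cdot\frac12\Big(\sup_{B_\epsilon(x)}\phi+\inf_{B_\epsilon(x)}\phi-2\phi(x)\Big)-\int_0^\epsilon L_\phi\Big(x,t\frac{p_x}{|p_x|},t\frac{p_x}{|p_x|}\Big)\mathrm{d}\mu_s(t)\Big|\le c_s s\Big(2\epsilon^{3-2s}\frac{|\nabla^2\phi(x)|^2}{|p_x|}+\epsilon^{2-2s}\sup_{y\in B_\epsilon(x)}|\nabla^2\phi(y)-\nabla^2\phi(x)|\Big).$$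
   Context: Fix $N\ge1$ and $s\in(\frac12,1)$. Let $C_s=\frac{4^s s\,\Gamma(\frac12+s)}{\pi^{1/2}\Gamma(1-s)}$ and $c_s=\frac{C_s}{s(1-s)}$. Let $\mu_s$ be the Borel measure on $(0,\infty)$ with $\mathrm{d}\mu_s(t)=C_s t^{-1-2s}\,\mathrm{d}t$. For $\phi:\mathbb{R}^N\to\mathbb{R}$ and $x,y,\tilde y\in\mathbb{R}^N$ let $L_\phi(x,y,\tilde y)=\phi(x+y)+\phi(x-\tilde y)-2\phi(x)$. $|\nabla^2\phi(\cdot)|$ denotes the operator norm of the Hessian matrix. *)

theory Defs
  imports "HOL-Analysis.Analysis"
begin

definition C_s :: "real \<Rightarrow> real" where
  "C_s s = 4 powr s * s * Gamma (1/2 + s) / (sqrt pi * Gamma (1 - s))"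

definition c_s :: "real \<Rightarrow> real" where
  "c_s s = C_s s / (s * (1 - s))"

definition mu_s :: "real \<Rightarrow> real measure" where
  "mu_s s = density lborel (\<lambda>t. ennreal (if 0 < t then C_s s * t powr (-1 - 2 * s) else 0))"

definition L_phi :: "('a::real_normed_vector \<Rightarrow> real) \<Rightarrow> 'a \<Rightarrow> 'a \<Rightarrow> 'a \<Rightarrow> real" where
  "L_phi \<phi> x y y' = \<phi> (x + y) + \<phi> (x - y') - 2 * \<phi> x"

definition mat_opnorm :: "real^'n^'n \<Rightarrow> real" where
  "mat_opnorm A = onorm (\<lambda>v. A *v v)"

end

theory Submission
  imports Defs
begin


lemma opnorm_mv: "norm (A *v v) \<le> mat_opnorm A * norm v"
  unfolding mat_opnorm_def by (rule onorm) simp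

lemma opnorm_nonneg: "0 \<le> mat_opnorm A"
  unfolding mat_opnorm_def by (rule onorm_pos_le) simp

lemma opnorm_bound: "mat_opnorm (A::real^'n^'n) \<le> real CARD('n) * real CARD('n) * norm A"
  unfolding mat_opnorm_def
proof (rule onorm_le_matrix_component)
  fix i j show "\<bar>A $ i $ j\<bar> \<le> norm A"
  proof -
    have "\<bar>A $ i $ j\<bar> \<le> norm (A $ i)" by (rule component_le_norm_cart)
    also have "\<dots> \<le> norm A" by (rule Finite_Cartesian_Product.norm_nth_le)
    finally show ?thesis .
  qed
qed

lemma line_deriv:
  fixes F :: "real^'n \<Rightarrow> 'b::real_normed_vector"
  assumes "(F has_derivative L) (at (x + t *\<^sub>R y))"
  shows "((\<lambda>t. F (x + t *\<^sub>R y)) has_derivative (\<lambda>h. L (h *\<^sub>R y))) (at t)"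
proof -
  have "((\<lambda>t. x + t *\<^sub>R y) has_derivative (\<lambda>h. h *\<^sub>R y)) (at t)"
    by (auto intro!: derivative_eq_intros)
  from has_derivative_compose[OF this assms] show ?thesis by (simp add: o_def)
qed

lemma taylor2:
  fixes \<phi> :: "real^'n \<Rightarrow> real" and g :: "real^'n \<Rightarrow> real^'n" and H :: "real^'n \<Rightarrow> real^'n^'n"
  assumes grad: "\<And>y. y \<in> cball x \<eta> \<Longrightarrow> (\<phi> has_derivative (\<lambda>h. g y \<bullet> h)) (at y within cball x \<eta>)"
    and hess: "\<And>y. y \<in> cball x \<eta> \<Longrightarrow> (g has_derivative (\<lambda>h. H y *v h)) (at y within cball x \<eta>)"
    and y: "norm y < \<eta>"
  shows "\<exists>\<tau>. 0 < \<tau> \<and> \<tau> < 1 \<and> \<phi> (x + y) = \<phi> x + g x \<bullet> y + ((H (x + \<tau> *\<^sub>R y) *v y) \<bullet> y) / 2"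
proof (cases "y = 0")
  case True then show ?thesis by (intro exI[of _ "1/2"]) auto
next
  case False
  define D :: "nat \<Rightarrow> real \<Rightarrow> real" where
    "D = (\<lambda>m t. if m = 0 then \<phi> (x + t *\<^sub>R y) else if m = 1 then g (x + t *\<^sub>R y) \<bullet> y
            else (H (x + t *\<^sub>R y) *v y) \<bullet> y)"
  have inball: "x + t *\<^sub>R y \<in> ball x \<eta>" if "0 \<le> t" "t \<le> 1" for t
  proof -
    have "norm (t *\<^sub>R y) \<le> norm y" using that by (simp add: mult_left_le_one_le)
    then show ?thesis using y by (simp add: dist_norm)
  qed
  have atw: "at (x + t *\<^sub>R y) within cball x \<eta> = at (x + t *\<^sub>R y)" if "0 \<le> t" "t \<le> 1" for t
    using inball[OF that] by (intro at_within_interior) simp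
  have der: "DERIV (D m) t :> D (Suc m) t" if "m < 2" "0 \<le> t" "t \<le> 1" for m t
  proof -
    have z: "x + t *\<^sub>R y \<in> cball x \<eta>" using inball[OF that(2,3)] by auto
    consider "m = 0" | "m = 1" using \<open>m < 2\<close> by fastforce
    then show ?thesis
    proof cases
      case 1
      have "(\<phi> has_derivative (\<lambda>h. g (x + t *\<^sub>R y) \<bullet> h)) (at (x + t *\<^sub>R y))"
        using grad[OF z] atw[OF that(2,3)] by simp
      from line_deriv[OF this] have X: "((\<lambda>t. \<phi> (x + t *\<^sub>R y)) has_derivative (\<lambda>h. g (x + t *\<^sub>R y) \<bullet> (h *\<^sub>R y))) (at t)" .
      show ?thesis
        unfolding has_field_derivative_def D_def using 1
        by (auto intro!: has_derivative_eq_rhs[OF X] simp: fun_eq_iff)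
    next
      case 2
      have "(g has_derivative (\<lambda>h. H (x + t *\<^sub>R y) *v h)) (at (x + t *\<^sub>R y))"
        using hess[OF z] atw[OF that(2,3)] by simp
      from line_deriv[OF this] have "((\<lambda>t. g (x + t *\<^sub>R y)) has_derivative (\<lambda>h. H (x + t *\<^sub>R y) *v (h *\<^sub>R y))) (at t)" .
      then have "((\<lambda>t. g (x + t *\<^sub>R y) \<bullet> y) has_derivative (\<lambda>h. (H (x + t *\<^sub>R y) *v (h *\<^sub>R y)) \<bullet> y)) (at t)"
        by (rule has_derivative_inner_left)
      then show ?thesis
        unfolding has_field_derivative_def D_def using 2
        by (auto elim!: has_derivative_eq_rhs simp: fun_eq_iff matrix_vector_mult_scaleR)
    qed
  qed
  have "\<exists>t. (if (1::real) < 0 then 1 < t \<and> t < 0 else 0 < t \<and> t < 1) \<and>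
    D 0 1 = (\<Sum>m<2. (D m 0 / fact m) * (1 - 0)^m) + (D 2 t / fact 2) * (1 - 0)^2"
    by (rule Taylor[of 2 D "D 0" 0 1]) (use der in auto)
  then obtain t where t: "0 < t" "t < 1" "D 0 1 = (\<Sum>m<2. (D m 0 / fact m) * (1 - 0)^m) + (D 2 t / fact 2) * (1 - 0)^2"
    by auto
  show ?thesis
    by (rule exI[of _ t]) (use t in \<open>simp add: D_def numeral_2_eq_2\<close>)
qed

lemma C_s_pos: "0 < s \<Longrightarrow> s < 1 \<Longrightarrow> 0 < C_s s"
  unfolding C_s_def by (intro divide_pos_pos mult_pos_pos) auto

lemma dens_meas: "(\<lambda>t::real. ennreal (if 0 < t then c * t powr b else 0)) \<in> borel_measurable borel"
proof -
  have "(\<lambda>t::real. indicator {0<..} t *\<^sub>R (c * t powr b)) \<in> borel_measurable borel"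
    by (rule borel_measurable_continuous_on_indicator) (auto intro!: continuous_intros)
  moreover have "(\<lambda>t::real. indicator {0<..} t *\<^sub>R (c * t powr b)) = (\<lambda>t. if 0 < t then c * t powr b else 0)"
    by (auto simp: indicator_def fun_eq_iff)
  ultimately have "(\<lambda>t::real. if 0 < t then c * t powr b else 0) \<in> borel_measurable borel" by simp
  then show ?thesis by (rule measurable_compose[OF _ measurable_ennreal])
qed

lemma sq_meas: "(\<lambda>t::real. ennreal (indicator {0<..e} t * t\<^sup>2)) \<in> borel_measurable borel"
proof -
  have "(\<lambda>t::real. indicator {0<..e} t *\<^sub>R t\<^sup>2) \<in> borel_measurable borel"
    by (rule borel_measurable_continuous_on_indicator) (auto intro!: continuous_intros)
  then have "(\<lambda>t::real. indicator {0<..e} t * t\<^sup>2) \<in> borel_measurable borel" by simp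
  then show ?thesis by (rule measurable_compose[OF _ measurable_ennreal])
qed

lemma K_nn:
  assumes e: "0 < \<epsilon>" and s: "1/2 < s" "s < 1"
  shows "(\<integral>\<^sup>+t. ennreal (indicator {0<..\<epsilon>} t * t\<^sup>2) \<partial>(mu_s s)) = ennreal (C_s s * (\<epsilon> powr (2 - 2 * s) / (2 - 2 * s)))"
proof -
  have C: "0 < C_s s" using s by (intro C_s_pos) auto
  have "(\<integral>\<^sup>+t. ennreal (indicator {0<..\<epsilon>} t * t\<^sup>2) \<partial>(mu_s s)) =
     (\<integral>\<^sup>+t. ennreal (if 0 < t then C_s s * t powr (-1 - 2 * s) else 0) * ennreal (indicator {0<..\<epsilon>} t * t\<^sup>2) \<partial>lborel)"
    unfolding mu_s_def
    by (rule nn_integral_density; subst measurable_lborel2) (rule dens_meas, rule sq_meas)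
  also have "\<dots> = (\<integral>\<^sup>+t. ennreal (C_s s * (indicator {0..\<epsilon>} t * t powr (1 - 2 * s))) \<partial>lborel)"
  proof (rule nn_integral_cong)
    fix t :: real
    show "ennreal (if 0 < t then C_s s * t powr (-1 - 2 * s) else 0) * ennreal (indicator {0<..\<epsilon>} t * t\<^sup>2) =
        ennreal (C_s s * (indicator {0..\<epsilon>} t * t powr (1 - 2 * s)))"
    proof (cases "0 < t")
      case True
      have eq: "t powr (-1 - 2 * s) * t\<^sup>2 = t powr (1 - 2 * s)"
      proof -
        have h: "t\<^sup>2 = t powr 2" using True by (simp add: powr_numeral)
        have "t powr (-1 - 2 * s) * t\<^sup>2 = t powr (-1 - 2 * s) * t powr 2" by (simp only: h)
        also have "\<dots> = t powr (-1 - 2 * s + 2)" by (rule powr_add[symmetric])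
        also have "\<dots> = t powr (1 - 2 * s)" by simp
        finally show ?thesis .
      qed
      have prod: "C_s s * t powr (-1 - 2 * s) * (indicator {0<..\<epsilon>} t * t\<^sup>2) = C_s s * (indicator {0..\<epsilon>} t * t powr (1 - 2 * s))"
      proof (cases "t \<le> \<epsilon>")
        case True2: True
        then have "C_s s * t powr (-1 - 2 * s) * (indicator {0<..\<epsilon>} t * t\<^sup>2) = C_s s * (t powr (-1 - 2 * s) * t\<^sup>2)"
          using True by (simp add: indicator_def)
        also have "\<dots> = C_s s * (indicator {0..\<epsilon>} t * t powr (1 - 2 * s))"
          using True True2 eq by (simp add: indicator_def)
        finally show ?thesis .
      next
        case False
        then show ?thesis by (simp add: indicator_def)
      qed
      have n1: "0 \<le> C_s s * t powr (-1 - 2 * s)" using C by simp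
      have n2: "0 \<le> indicator {0<..\<epsilon>} t * t\<^sup>2" by simp
      have "ennreal (if 0 < t then C_s s * t powr (-1 - 2 * s) else 0) * ennreal (indicator {0<..\<epsilon>} t * t\<^sup>2)
          = ennreal (C_s s * t powr (-1 - 2 * s)) * ennreal (indicator {0<..\<epsilon>} t * t\<^sup>2)"
        using True by (simp only: if_True)
      also have "\<dots> = ennreal (C_s s * t powr (-1 - 2 * s) * (indicator {0<..\<epsilon>} t * t\<^sup>2))"
        by (rule ennreal_mult[symmetric, OF n1 n2])
      also have "\<dots> = ennreal (C_s s * (indicator {0..\<epsilon>} t * t powr (1 - 2 * s)))"
        by (simp only: prod)
      finally show ?thesis .
    next
      case False
      have z: "indicator {0..\<epsilon>} t * t powr (1 - 2 * s) = 0"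
        using False by (cases "t = 0") (simp_all add: indicator_def)
      show ?thesis using False by (simp only: z if_False mult_zero_right ennreal_0 mult_zero_left)
    qed
  qed
  also have "\<dots> = ennreal (C_s s * (\<epsilon> powr (2 - 2 * s) / (2 - 2 * s)))"
  proof (rule nn_integral_has_integral_lborel)
    have "(\<lambda>t::real. indicator {0<..\<epsilon>} t *\<^sub>R t powr (1 - 2 * s)) \<in> borel_measurable borel"
      by (rule borel_measurable_continuous_on_indicator) (auto intro!: continuous_intros)
    moreover have "(\<lambda>t::real. indicator {0<..\<epsilon>} t *\<^sub>R t powr (1 - 2 * s)) = (\<lambda>t. indicator {0..\<epsilon>} t * t powr (1 - 2 * s))"
      by (auto simp: indicator_def fun_eq_iff)
    ultimately have "(\<lambda>t::real. indicator {0..\<epsilon>} t * t powr (1 - 2 * s)) \<in> borel_measurable borel" by simp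
    then show "(\<lambda>t. C_s s * (indicator {0..\<epsilon>} t * t powr (1 - 2 * s))) \<in> borel_measurable borel"
      by (rule borel_measurable_times[OF borel_measurable_const])
    show "0 \<le> C_s s * (indicator {0..\<epsilon>} t * t powr (1 - 2 * s))" for t :: real
      using C by (auto simp: indicator_def)
    have P: "((\<lambda>t. t powr (1 - 2 * s)) has_integral (\<epsilon> powr ((1 - 2 * s)+1) / ((1 - 2 * s)+1))) {0..\<epsilon>}"
      using s e by (intro has_integral_powr_from_0) auto
    have "((\<lambda>t. indicator {0..\<epsilon>} t * t powr (1 - 2 * s)) has_integral (\<epsilon> powr (2 - 2 * s) / (2 - 2 * s))) UNIV"
    proof -
      have "(\<lambda>t. indicator {0..\<epsilon>} t * t powr (1 - 2 * s)) = (\<lambda>t. if t \<in> {0..\<epsilon>} then t powr (1 - 2 * s) else 0)"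
        by (auto simp: indicator_def fun_eq_iff)
      moreover have "\<epsilon> powr ((1 - 2 * s)+1) / ((1 - 2 * s)+1) = \<epsilon> powr (2 - 2 * s) / (2 - 2 * s)"
        by (simp add: algebra_simps)
      ultimately show ?thesis using P
        by (simp only: has_integral_restrict_UNIV)
    qed
    then show "((\<lambda>t. C_s s * (indicator {0..\<epsilon>} t * t powr (1 - 2 * s))) has_integral C_s s * (\<epsilon> powr (2 - 2 * s) / (2 - 2 * s))) UNIV"
      by (rule has_integral_mult_right)
  qed
  finally show ?thesis .
qed

lemma quad_bound:
  fixes w y :: "real^'n" and A :: "real^'n^'n"
  assumes w: "w \<noteq> 0" and y: "norm y \<le> \<epsilon>" and e: "0 < \<epsilon>" and AM: "\<And>v. norm (A *v v) \<le> M * norm v"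
  shows "w \<bullet> y + ((A *v y) \<bullet> y) / 2 \<le> \<epsilon> * norm w + \<epsilon>\<^sup>2 * ((A *v (w /\<^sub>R norm w)) \<bullet> (w /\<^sub>R norm w)) / 2
            + \<epsilon> ^ 3 * M\<^sup>2 / (2 * norm w)"
proof -
  define nw where "nw = norm w"
  define u where "u = w /\<^sub>R nw"
  have nw: "0 < nw" using w by (simp add: nw_def)
  have nu: "norm u = 1" using nw by (simp add: u_def nw_def)
  have wu: "w = nw *\<^sub>R u" using nw by (simp add: u_def)
  define z where "z = \<epsilon> *\<^sub>R u"
  define d where "d = norm (y - z)"
  define \<delta> where "\<delta> = \<epsilon> - u \<bullet> y"
  have M0: "0 \<le> M" using AM[of u] nu by (metis mult.right_neutral norm_ge_zero order_trans)
  have h1: "u \<bullet> y \<le> \<epsilon>"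
    using norm_cauchy_schwarz[of u y] nu y by simp
  have nz: "norm z = \<epsilon>" using nu e by (simp add: z_def)
  have "d\<^sup>2 = y \<bullet> y - 2 * \<epsilon> * (u \<bullet> y) + \<epsilon>\<^sup>2"
  proof -
    have uu: "u \<bullet> u = 1" using nu by (simp add: norm_eq_1)
    have "d\<^sup>2 = (y - z) \<bullet> (y - z)" unfolding d_def by (rule power2_norm_eq_inner)
    also have "\<dots> = y \<bullet> y - 2 * (z \<bullet> y) + z \<bullet> z"
      by (simp add: inner_diff_left inner_diff_right inner_commute)
    also have "\<dots> = y \<bullet> y - 2 * \<epsilon> * (u \<bullet> y) + \<epsilon>\<^sup>2"
      by (simp add: z_def uu power2_eq_square)
    finally show ?thesis .
  qed
  moreover have "y \<bullet> y \<le> \<epsilon>\<^sup>2"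
    using y by (metis norm_ge_zero power2_norm_eq_inner power_mono)
  ultimately have h2: "d\<^sup>2 \<le> 2 * \<epsilon> * \<delta>" unfolding \<delta>_def by (simp add: algebra_simps power2_eq_square)
  have h4: "(A *v y) \<bullet> y - (A *v z) \<bullet> z = (A *v (y - z)) \<bullet> y + (A *v z) \<bullet> (y - z)"
    by (simp add: matrix_vector_mult_diff_distrib inner_diff_left inner_diff_right inner_commute)
  have h5a: "\<bar>(A *v (y - z)) \<bullet> y\<bar> \<le> M * d * \<epsilon>"
  proof -
    have "\<bar>(A *v (y - z)) \<bullet> y\<bar> \<le> norm (A *v (y - z)) * norm y" by (rule Cauchy_Schwarz_ineq2)
    also have "\<dots> \<le> (M * d) * \<epsilon>"
      using AM[of "y - z"] y M0 by (intro mult_mono) (auto simp: d_def)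
    finally show ?thesis by simp
  qed
  have h5b: "\<bar>(A *v z) \<bullet> (y - z)\<bar> \<le> M * d * \<epsilon>"
  proof -
    have "\<bar>(A *v z) \<bullet> (y - z)\<bar> \<le> norm (A *v z) * norm (y - z)" by (rule Cauchy_Schwarz_ineq2)
    also have "\<dots> \<le> (M * \<epsilon>) * d"
      using AM[of z] nz M0 by (intro mult_mono) (auto simp: d_def)
    finally show ?thesis by (simp add: mult_ac)
  qed
  have q: "(A *v y) \<bullet> y / 2 \<le> (A *v z) \<bullet> z / 2 + \<epsilon> * M * d"
    using h4 h5a h5b by (simp add: abs_le_iff algebra_simps)
  have sq: "0 \<le> (d * nw - \<epsilon>\<^sup>2 * M)\<^sup>2" by simp
  have amgm: "\<epsilon> * M * d \<le> nw * \<delta> + \<epsilon> ^ 3 * M\<^sup>2 / (2 * nw)"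
  proof -
    have "2 * nw * \<epsilon> * (\<epsilon> * M * d) \<le> d\<^sup>2 * nw\<^sup>2 + \<epsilon>^4 * M\<^sup>2"
      using sq by (simp add: power2_eq_square algebra_simps power4_eq_xxxx)
    also have "\<dots> \<le> 2 * \<epsilon> * \<delta> * nw\<^sup>2 + \<epsilon>^4 * M\<^sup>2"
      using h2 by (simp add: mult_right_mono)
    also have "\<dots> = 2 * nw * \<epsilon> * (nw * \<delta> + \<epsilon> ^ 3 * M\<^sup>2 / (2 * nw))"
      using nw by (simp add: field_simps power2_eq_square power4_eq_xxxx power3_eq_cube)
    finally show ?thesis using nw e by (simp add: mult_le_cancel_left_pos)
  qed
  have wy: "w \<bullet> y = nw * (u \<bullet> y)" by (simp add: wu)
  have zz: "(A *v z) \<bullet> z = \<epsilon>\<^sup>2 * ((A *v u) \<bullet> u)"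
    by (simp add: z_def matrix_vector_mult_scaleR power2_eq_square)
  show ?thesis
    using q amgm zz unfolding wy nw_def[symmetric] u_def[symmetric] \<delta>_def
    by (simp add: algebra_simps)
qed

lemma meas_mu:
  fixes f :: "real \<Rightarrow> real"
  assumes "continuous_on {0<..\<epsilon>} f"
  shows "(\<lambda>t. indicator {0<..\<epsilon>} t * f t) \<in> borel_measurable (mu_s s)"
proof -
  have "(\<lambda>t. indicator {0<..\<epsilon>} t *\<^sub>R f t) \<in> borel_measurable borel"
    by (rule borel_measurable_continuous_on_indicator) (use assms in auto)
  then show ?thesis by (simp add: mu_s_def)
qed

lemma K_int:
  assumes e: "0 < \<epsilon>" and s: "1/2 < s" "s < 1"
  shows "integrable (mu_s s) (\<lambda>t. indicator {0<..\<epsilon>} t * t\<^sup>2)"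
    "integral\<^sup>L (mu_s s) (\<lambda>t. indicator {0<..\<epsilon>} t * t\<^sup>2) = C_s s * (\<epsilon> powr (2 - 2 * s) / (2 - 2 * s))"
proof -
  have C: "0 < C_s s" using s by (intro C_s_pos) auto
  have "has_bochner_integral (mu_s s) (\<lambda>t. indicator {0<..\<epsilon>} t * t\<^sup>2) (C_s s * (\<epsilon> powr (2 - 2 * s) / (2 - 2 * s)))"
  proof (rule has_bochner_integral_nn_integral)
    show "(\<lambda>t. indicator {0<..\<epsilon>} t * t\<^sup>2) \<in> borel_measurable (mu_s s)"
      by (rule meas_mu) (intro continuous_intros)
    show "AE x in mu_s s. 0 \<le> indicator {0<..\<epsilon>} x * x\<^sup>2" by (rule AE_I2) simp
    have "0 < 2 - 2 * s" using s by simp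
    then show "0 \<le> C_s s * (\<epsilon> powr (2 - 2 * s) / (2 - 2 * s))" using C
      by (intro mult_nonneg_nonneg divide_nonneg_pos) simp_all
    show "(\<integral>\<^sup>+t. ennreal (indicator {0<..\<epsilon>} t * t\<^sup>2) \<partial>(mu_s s)) = ennreal (C_s s * (\<epsilon> powr (2 - 2 * s) / (2 - 2 * s)))"
      by (rule K_nn[OF assms])
  qed
  note hb = this
  show "integrable (mu_s s) (\<lambda>t. indicator {0<..\<epsilon>} t * t\<^sup>2)"
    using hb by (simp only: has_bochner_integral_iff)
  show "integral\<^sup>L (mu_s s) (\<lambda>t. indicator {0<..\<epsilon>} t * t\<^sup>2) = C_s s * (\<epsilon> powr (2 - 2 * s) / (2 - 2 * s))"
    by (rule has_bochner_integral_integral_eq[OF hb])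
qed

lemma J_bound:
  assumes e: "0 < \<epsilon>" and s: "1/2 < s" "s < 1" and \<omega>: "0 \<le> \<omega>"
    and cont: "continuous_on {0<..\<epsilon>} f"
    and fb: "\<And>t. 0 < t \<Longrightarrow> t \<le> \<epsilon> \<Longrightarrow> \<bar>f t - a * t\<^sup>2\<bar> \<le> \<omega> * t\<^sup>2"
  shows "\<bar>(LINT t:{0<..\<epsilon>}|mu_s s. f t) - a * (C_s s * (\<epsilon> powr (2 - 2 * s) / (2 - 2 * s)))\<bar>
     \<le> \<omega> * (C_s s * (\<epsilon> powr (2 - 2 * s) / (2 - 2 * s)))"
proof -
  define I where "I = (\<lambda>t. indicator {0<..\<epsilon>} t * t\<^sup>2 :: real)"
  define F where "F = (\<lambda>t. indicator {0<..\<epsilon>} t * f t :: real)"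
  define K where "K = C_s s * (\<epsilon> powr (2 - 2 * s) / (2 - 2 * s))"
  have Iint: "integrable (mu_s s) I" and IK: "integral\<^sup>L (mu_s s) I = K"
    using K_int[OF assms(1-3)] by (simp_all add: I_def K_def)
  have Fm: "F \<in> borel_measurable (mu_s s)" unfolding F_def by (rule meas_mu[OF cont])
  have pt: "\<bar>F t - a * I t\<bar> \<le> \<omega> * I t" for t
    using fb[of t] by (auto simp: F_def I_def indicator_def)
  have Fint: "integrable (mu_s s) F"
  proof (rule Bochner_Integration.integrable_bound[OF _ Fm])
    show "integrable (mu_s s) (\<lambda>t. (\<bar>a\<bar> + \<omega>) * I t)" using Iint by auto
    show "AE x in mu_s s. norm (F x) \<le> norm ((\<bar>a\<bar> + \<omega>) * I x)"
    proof (rule AE_I2)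
      fix t
      have "\<bar>a * I t\<bar> = \<bar>a\<bar> * I t" by (simp add: I_def indicator_def abs_mult)
      moreover have "0 \<le> (\<bar>a\<bar> + \<omega>) * I t" using \<omega> by (simp add: I_def indicator_def)
      ultimately show "norm (F t) \<le> norm ((\<bar>a\<bar> + \<omega>) * I t)"
        using pt[of t] by (simp add: algebra_simps)
    qed
  qed
  have eq: "(LINT t:{0<..\<epsilon>}|mu_s s. f t) - a * K = integral\<^sup>L (mu_s s) (\<lambda>t. F t - a * I t)"
    using Fint Iint IK by (simp add: set_lebesgue_integral_def F_def)
  have pt1: "F t - a * I t \<le> \<omega> * I t" "- (\<omega> * I t) \<le> F t - a * I t" for t
    using pt[of t] by linarith+
  have up: "integral\<^sup>L (mu_s s) (\<lambda>t. F t - a * I t) \<le> integral\<^sup>L (mu_s s) (\<lambda>t. \<omega> * I t)"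
    by (rule integral_mono) (use Fint Iint pt1 in auto)
  have lo: "integral\<^sup>L (mu_s s) (\<lambda>t. - (\<omega> * I t)) \<le> integral\<^sup>L (mu_s s) (\<lambda>t. F t - a * I t)"
    by (rule integral_mono) (use Fint Iint pt1 in auto)
  show ?thesis
    using up lo IK unfolding eq K_def[symmetric] by (simp add: abs_le_iff)
qed

lemma left_limit_le:
  fixes h :: "real \<Rightarrow> real"
  assumes "isCont h \<epsilon>" "0 < \<epsilon>" "\<And>t. 0 < t \<Longrightarrow> t < \<epsilon> \<Longrightarrow> h t \<le> S"
  shows "h \<epsilon> \<le> S"
proof (rule tendsto_upperbound)
  show "(h \<longlongrightarrow> h \<epsilon>) (at_left \<epsilon>)"
    using assms(1) unfolding isCont_def by (rule tendsto_within_subset) auto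
  show "\<forall>\<^sub>F t in at_left \<epsilon>. h t \<le> S"
    using eventually_at_left_real[OF assms(2)] by eventually_elim (use assms(3) in auto)
  show "\<not> trivial_limit (at_left \<epsilon>)" by (rule trivial_limit_at_left_real)
qed

lemma neg_mv: "(- A) *v v = - (A *v (v::real^'n))" for A :: "real^'n^'m"
  by (simp add: matrix_vector_mult_def vec_eq_iff sum_negf)

lemma mv_neg: "A *v (- v) = - (A *v (v::real^'n))" for A :: "real^'n^'m"
  by (simp add: matrix_vector_mult_def vec_eq_iff sum_negf)



theorem proposition4p1:
  fixes s :: real and x :: "real^'n" and \<eta> :: real
    and \<phi> :: "real^'n \<Rightarrow> real" and g :: "real^'n \<Rightarrow> real^'n" and H :: "real^'n \<Rightarrow> real^'n^'n"
  assumes s_range: "1/2 < s" "s < 1"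
    and eta_pos: "\<eta> > 0"
    and grad: "\<And>y. y \<in> cball x \<eta> \<Longrightarrow> (\<phi> has_derivative (\<lambda>h. g y \<bullet> h)) (at y within cball x \<eta>)"
    and hess: "\<And>y. y \<in> cball x \<eta> \<Longrightarrow> (g has_derivative (\<lambda>h. H y *v h)) (at y within cball x \<eta>)"
    and hess_cont: "continuous_on (cball x \<eta>) H"
    and px_nz: "g x \<noteq> 0"
  shows "\<forall>\<epsilon>. 0 < \<epsilon> \<and> \<epsilon> < \<eta> \<and> \<epsilon> * mat_opnorm (H x) \<le> norm (g x) \<longrightarrow>
    \<bar>c_s s * s * \<epsilon> powr (-2 * s) * (1/2) *
        (Sup (\<phi> ` ball x \<epsilon>) + Inf (\<phi> ` ball x \<epsilon>) - 2 * \<phi> x)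
      - (LINT t:{0<..\<epsilon>}|mu_s s.
           L_phi \<phi> x (t *\<^sub>R (g x /\<^sub>R norm (g x))) (t *\<^sub>R (g x /\<^sub>R norm (g x))))\<bar>
    \<le> c_s s * s * (2 * \<epsilon> powr (3 - 2 * s) * (mat_opnorm (H x))\<^sup>2 / norm (g x)
         + \<epsilon> powr (2 - 2 * s) * Sup ((\<lambda>y. mat_opnorm (H y - H x)) ` ball x \<epsilon>))"
proof (intro allI impI)
  fix \<epsilon> assume "0 < \<epsilon> \<and> \<epsilon> < \<eta> \<and> \<epsilon> * mat_opnorm (H x) \<le> norm (g x)"
  then have e: "0 < \<epsilon>" "\<epsilon> < \<eta>" by auto
  define p where "p = g x"
  define np where "np = norm p"
  define u where "u = p /\<^sub>R np"
  define M where "M = mat_opnorm (H x)"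
  define \<Omega> where "\<Omega> = (\<lambda>y. mat_opnorm (H y - H x))"
  define \<omega> where "\<omega> = Sup (\<Omega> ` ball x \<epsilon>)"
  define a where "a = (H x *v u) \<bullet> u"
  have np: "0 < np" using px_nz by (simp add: np_def p_def)
  have nu: "norm u = 1" using np by (simp add: u_def np_def)
  have pu: "p \<bullet> u = np" using np by (simp add: u_def np_def dot_square_norm power2_eq_square)
  have M0: "0 \<le> M" unfolding M_def by (rule opnorm_nonneg)
  have bddO: "bdd_above (\<Omega> ` ball x \<epsilon>)"
  proof -
    have "compact (H ` cball x \<eta>)" by (rule compact_continuous_image[OF hess_cont]) simp
    then obtain B where B: "\<And>z. z \<in> H ` cball x \<eta> \<Longrightarrow> norm z \<le> B"
      using compact_imp_bounded bounded_iff by metis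
    have "\<Omega> y \<le> real CARD('n) * real CARD('n) * (B + B)" if "y \<in> ball x \<epsilon>" for y
    proof -
      have "y \<in> cball x \<eta>" "x \<in> cball x \<eta>" using that e eta_pos by auto
      then have "norm (H y - H x) \<le> B + B"
        using B norm_triangle_ineq4[of "H y" "H x"] by (meson add_mono image_eqI order_trans)
      then show ?thesis unfolding \<Omega>_def
        using opnorm_bound[of "H y - H x"] by (meson mult_left_mono of_nat_0_le_iff mult_nonneg_nonneg order_trans)
    qed
    then show ?thesis by (rule bdd_aboveI2)
  qed
  have \<omega>ge: "\<Omega> y \<le> \<omega>" if "y \<in> ball x \<epsilon>" for y
    unfolding \<omega>_def using bddO that by (auto intro: cSup_upper)
  have \<omega>0: "0 \<le> \<omega>" using \<omega>ge[of x] e opnorm_nonneg[of "H x - H x"] by (auto simp: \<Omega>_def)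
  have R: "\<bar>\<phi> (x + y) - \<phi> x - p \<bullet> y - (H x *v y) \<bullet> y / 2\<bar> \<le> \<omega> / 2 * (norm y)\<^sup>2"
    if y: "norm y \<le> \<epsilon>" for y
  proof -
    obtain \<tau> where \<tau>: "0 < \<tau>" "\<tau> < 1" "\<phi> (x + y) = \<phi> x + g x \<bullet> y + ((H (x + \<tau> *\<^sub>R y) *v y) \<bullet> y) / 2"
      using taylor2[OF grad hess, of y] y e by force
    have inb: "x + \<tau> *\<^sub>R y \<in> ball x \<epsilon>"
    proof (cases "y = 0")
      case True then show ?thesis using e by simp
    next
      case False
      have "norm (\<tau> *\<^sub>R y) < norm y" using \<tau> False by simp
      then show ?thesis using y by (simp add: dist_norm)
    qed
    have "\<phi> (x + y) - \<phi> x - p \<bullet> y - (H x *v y) \<bullet> y / 2 = ((H (x + \<tau> *\<^sub>R y) - H x) *v y) \<bullet> y / 2"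
      using \<tau>(3) by (simp add: p_def matrix_vector_mult_diff_rdistrib inner_diff_left field_simps)
    also have "\<bar>\<dots>\<bar> \<le> norm ((H (x + \<tau> *\<^sub>R y) - H x) *v y) * norm y / 2"
      using Cauchy_Schwarz_ineq2 by (simp add: abs_mult)
    also have "\<dots> \<le> (\<Omega> (x + \<tau> *\<^sub>R y) * norm y) * norm y / 2"
      unfolding \<Omega>_def by (intro divide_right_mono mult_right_mono opnorm_mv) auto
    also have "\<dots> \<le> (\<omega> * norm y) * norm y / 2"
      using \<omega>ge[OF inb] by (intro divide_right_mono mult_right_mono) auto
    finally show ?thesis by (simp add: power2_eq_square)
  qed
  have Qup: "p \<bullet> y + (H x *v y) \<bullet> y / 2 \<le> \<epsilon> * np + \<epsilon>\<^sup>2 * a / 2 + \<epsilon> ^ 3 * M\<^sup>2 / (2 * np)"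
    if "norm y \<le> \<epsilon>" for y
    using quad_bound[of p y \<epsilon> "H x" M] px_nz that e opnorm_mv[of "H x"]
    unfolding a_def u_def np_def M_def p_def by auto
  have Qlo: "- \<epsilon> * np + \<epsilon>\<^sup>2 * a / 2 - \<epsilon> ^ 3 * M\<^sup>2 / (2 * np) \<le> p \<bullet> y + (H x *v y) \<bullet> y / 2"
    if "norm y \<le> \<epsilon>" for y
  proof -
    have "(- p) \<bullet> y + ((- H x) *v y) \<bullet> y / 2 \<le> \<epsilon> * norm (- p)
       + \<epsilon>\<^sup>2 * (((- H x) *v (- p /\<^sub>R norm (- p))) \<bullet> (- p /\<^sub>R norm (- p))) / 2
       + \<epsilon> ^ 3 * M\<^sup>2 / (2 * norm (- p))"
      using px_nz that e opnorm_mv[of "H x"] unfolding p_def M_def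
      by (intro quad_bound) (auto simp: neg_mv)
    moreover have "((- H x) *v (- p /\<^sub>R norm (- p))) \<bullet> (- p /\<^sub>R norm (- p)) = - a"
      unfolding a_def u_def np_def by (simp add: neg_mv mv_neg)
    ultimately show ?thesis by (simp add: neg_mv np_def)
  qed
  define \<Phi> where "\<Phi> = \<phi> ` ball x \<epsilon>"
  have ne: "\<Phi> \<noteq> {}" using e by (simp add: \<Phi>_def)
  define Uup where "Uup = \<phi> x + \<epsilon> * np + \<epsilon>\<^sup>2 * a / 2 + \<epsilon> ^ 3 * M\<^sup>2 / (2 * np) + \<omega> / 2 * \<epsilon>\<^sup>2"
  define Llo where "Llo = \<phi> x - \<epsilon> * np + \<epsilon>\<^sup>2 * a / 2 - \<epsilon> ^ 3 * M\<^sup>2 / (2 * np) - \<omega> / 2 * \<epsilon>\<^sup>2"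
  have bnd: "Llo \<le> \<phi> z \<and> \<phi> z \<le> Uup" if "z \<in> ball x \<epsilon>" for z
  proof -
    define y where "y = z - x"
    have ny: "norm y \<le> \<epsilon>" using that by (simp add: y_def dist_norm norm_minus_commute)
    have z: "z = x + y" by (simp add: y_def)
    have "\<omega> / 2 * (norm y)\<^sup>2 \<le> \<omega> / 2 * \<epsilon>\<^sup>2" using \<omega>0 ny by (intro mult_left_mono power_mono) auto
    moreover have "\<bar>\<phi> (x + y) - \<phi> x - p \<bullet> y - (H x *v y) \<bullet> y / 2\<bar> \<le> \<omega> / 2 * (norm y)\<^sup>2" by (rule R[OF ny])
    ultimately show ?thesis using Qup[OF ny] Qlo[OF ny] unfolding z Uup_def Llo_def abs_le_iff by linarith
  qed
  have bA: "bdd_above \<Phi>" unfolding \<Phi>_def using bnd by (intro bdd_aboveI2[where M=Uup]) auto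
  have bB: "bdd_below \<Phi>" unfolding \<Phi>_def using bnd by (intro bdd_belowI2[where m=Llo]) auto
  have S_up: "Sup \<Phi> \<le> Uup" using ne bnd by (intro cSup_least) (auto simp: \<Phi>_def)
  have I_lo: "Llo \<le> Inf \<Phi>" using ne bnd by (intro cInf_greatest) (auto simp: \<Phi>_def)
  have ptu: "p \<bullet> (t *\<^sub>R u) = t * np" "(H x *v (t *\<^sub>R u)) \<bullet> (t *\<^sub>R u) = t\<^sup>2 * a"
     "norm (t *\<^sub>R u) = \<bar>t\<bar>" for t
    using pu nu by (simp_all add: a_def matrix_vector_mult_scaleR power2_eq_square)
  define hS where "hS = (\<lambda>t. \<phi> x + t * np + t\<^sup>2 * a / 2 - \<omega> / 2 * t\<^sup>2)"
  define hI where "hI = (\<lambda>t. \<phi> x - t * np + t\<^sup>2 * a / 2 + \<omega> / 2 * t\<^sup>2)"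
  have S_lo: "hS \<epsilon> \<le> Sup \<Phi>"
  proof (rule left_limit_le[where h=hS and \<epsilon>=\<epsilon>])
    show "isCont hS \<epsilon>" unfolding hS_def by (intro continuous_intros) auto
    show "0 < \<epsilon>" by (rule e)
    fix t assume t: "0 < t" "t < \<epsilon>"
    have ny: "norm (t *\<^sub>R u) \<le> \<epsilon>" using t ptu(3)[of t] by simp
    have inb: "x + t *\<^sub>R u \<in> ball x \<epsilon>" using t ptu(3)[of t] by (simp add: dist_norm)
    have "hS t \<le> \<phi> (x + t *\<^sub>R u)"
      using R[OF ny] t unfolding ptu hS_def abs_le_iff by simp
    also have "\<dots> \<le> Sup \<Phi>" using inb bA by (intro cSup_upper) (auto simp: \<Phi>_def)
    finally show "hS t \<le> Sup \<Phi>" .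
  qed
  have I_up: "Inf \<Phi> \<le> hI \<epsilon>"
  proof -
    have "- hI \<epsilon> \<le> - Inf \<Phi>"
    proof (rule left_limit_le[where h="\<lambda>t. - hI t" and \<epsilon>=\<epsilon>])
      show "isCont (\<lambda>t. - hI t) \<epsilon>" unfolding hI_def by (intro continuous_intros) auto
      show "0 < \<epsilon>" by (rule e)
      fix t assume t: "0 < t" "t < \<epsilon>"
      have ny: "norm (- (t *\<^sub>R u)) \<le> \<epsilon>" using t ptu(3)[of t] by simp
      have inb: "x - t *\<^sub>R u \<in> ball x \<epsilon>" using t ptu(3)[of t] by (simp add: dist_norm)
      have "\<phi> (x - t *\<^sub>R u) \<le> hI t"
        using R[OF ny] t unfolding inner_minus_right mv_neg inner_minus_left norm_minus_cancel ptu hI_def abs_le_iff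
        by simp
      moreover have "Inf \<Phi> \<le> \<phi> (x - t *\<^sub>R u)" using inb bB by (intro cInf_lower) (auto simp: \<Phi>_def)
      ultimately show "- hI t \<le> - Inf \<Phi>" by simp
    qed
    then show ?thesis by simp
  qed
  define A where "A = Sup \<Phi> + Inf \<Phi> - 2 * \<phi> x"
  have Ab: "\<bar>A - \<epsilon>\<^sup>2 * a\<bar> \<le> \<epsilon> ^ 3 * M\<^sup>2 / (2 * np) + \<omega> * \<epsilon>\<^sup>2"
    using S_up S_lo I_lo I_up unfolding A_def Uup_def Llo_def hS_def hI_def abs_le_iff by linarith
  define L where "L = (\<lambda>t. L_phi \<phi> x (t *\<^sub>R u) (t *\<^sub>R u))"
  have cphi: "continuous_on (cball x \<eta>) \<phi>" by (rule has_derivative_continuous_on[OF grad])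
  have contL: "continuous_on {0<..\<epsilon>} L"
  proof -
    have sub1: "(\<lambda>t. x + t *\<^sub>R u) ` {0<..\<epsilon>} \<subseteq> cball x \<eta>"
      using e nu by (auto simp: dist_norm)
    have sub2: "(\<lambda>t. x - t *\<^sub>R u) ` {0<..\<epsilon>} \<subseteq> cball x \<eta>"
      using e nu by (auto simp: dist_norm)
    have c1: "continuous_on {0<..\<epsilon>} (\<lambda>t. \<phi> (x + t *\<^sub>R u))"
      by (rule continuous_on_compose2[OF cphi _ sub1]) (intro continuous_intros)
    have c2: "continuous_on {0<..\<epsilon>} (\<lambda>t. \<phi> (x - t *\<^sub>R u))"
      by (rule continuous_on_compose2[OF cphi _ sub2]) (intro continuous_intros)
    show ?thesis unfolding L_def L_phi_def by (intro continuous_intros c1 c2)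
  qed
  have Lpt: "\<bar>L t - a * t\<^sup>2\<bar> \<le> \<omega> * t\<^sup>2" if t: "0 < t" "t \<le> \<epsilon>" for t
  proof -
    have ny1: "norm (t *\<^sub>R u) \<le> \<epsilon>" using t ptu(3)[of t] by simp
    have ny2: "norm (- (t *\<^sub>R u)) \<le> \<epsilon>" using t ptu(3)[of t] by simp
    have r1: "\<bar>\<phi> (x + t *\<^sub>R u) - \<phi> x - t * np - t\<^sup>2 * a / 2\<bar> \<le> \<omega> / 2 * t\<^sup>2"
      using R[OF ny1] t unfolding ptu by simp
    have r2: "\<bar>\<phi> (x - t *\<^sub>R u) - \<phi> x + t * np - t\<^sup>2 * a / 2\<bar> \<le> \<omega> / 2 * t\<^sup>2"
      using R[OF ny2] t unfolding inner_minus_right mv_neg inner_minus_left norm_minus_cancel ptu by simp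
    show ?thesis using r1 r2 unfolding L_def L_phi_def abs_le_iff by (simp add: algebra_simps)
  qed
  define K where "K = C_s s * (\<epsilon> powr (2 - 2 * s) / (2 - 2 * s))"
  have Jb: "\<bar>(LINT t:{0<..\<epsilon>}|mu_s s. L t) - a * K\<bar> \<le> \<omega> * K"
    unfolding K_def by (rule J_bound[OF e(1) s_range \<omega>0 contL Lpt])
  define cS where "cS = c_s s * s"
  define Em where "Em = \<epsilon> powr (-2 * s)"
  have cS: "cS = C_s s / (1 - s)" using s_range by (simp add: cS_def c_s_def)
  have cS0: "0 < cS" unfolding cS using s_range C_s_pos[of s] by auto
  have Em0: "0 < Em" using e by (simp add: Em_def)
  have E2: "\<epsilon> powr (2 - 2 * s) = Em * \<epsilon>\<^sup>2"
  proof -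
    have "\<epsilon> powr (2 - 2 * s) = \<epsilon> powr (-2 * s + 2)" by simp
    also have "\<dots> = Em * \<epsilon> powr 2" unfolding Em_def by (rule powr_add)
    finally show ?thesis using e by (simp add: powr_numeral)
  qed
  have E3: "\<epsilon> powr (3 - 2 * s) = Em * \<epsilon> ^ 3"
  proof -
    have "\<epsilon> powr (3 - 2 * s) = \<epsilon> powr (-2 * s + 3)" by simp
    also have "\<dots> = Em * \<epsilon> powr 3" unfolding Em_def by (rule powr_add)
    finally show ?thesis using e by (simp add: powr_numeral)
  qed
  have KE: "K = cS * Em * \<epsilon>\<^sup>2 / 2"
    unfolding K_def E2 cS using s_range by (simp add: field_simps)
  have split: "cS * Em * (1/2) * A - (LINT t:{0<..\<epsilon>}|mu_s s. L t)
      = cS * Em * (1/2) * (A - \<epsilon>\<^sup>2 * a) + (a * K - (LINT t:{0<..\<epsilon>}|mu_s s. L t))"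
    unfolding KE by (simp add: algebra_simps)
  have t1: "\<bar>cS * Em * (1/2) * (A - \<epsilon>\<^sup>2 * a)\<bar> \<le> cS * Em * (1/2) * (\<epsilon> ^ 3 * M\<^sup>2 / (2 * np) + \<omega> * \<epsilon>\<^sup>2)"
    using Ab cS0 Em0 by (simp add: abs_mult)
  have t2: "\<bar>a * K - (LINT t:{0<..\<epsilon>}|mu_s s. L t)\<bar> \<le> \<omega> * K" using Jb by (simp add: abs_minus_commute)
  have fin: "cS * Em * (1/2) * (\<epsilon> ^ 3 * M\<^sup>2 / (2 * np) + \<omega> * \<epsilon>\<^sup>2) + \<omega> * K
      \<le> cS * (2 * (Em * \<epsilon> ^ 3) * M\<^sup>2 / np + (Em * \<epsilon>\<^sup>2) * \<omega>)"
  proof -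
    have nn: "0 \<le> cS * Em * \<epsilon> ^ 3 * M\<^sup>2 / np" using cS0 Em0 e np by auto
    have "cS * Em * (1/2) * (\<epsilon> ^ 3 * M\<^sup>2 / (2 * np) + \<omega> * \<epsilon>\<^sup>2) + \<omega> * K
        = (1/4) * (cS * Em * \<epsilon> ^ 3 * M\<^sup>2 / np) + cS * (Em * \<epsilon>\<^sup>2) * \<omega>"
      unfolding KE using np by (simp add: field_simps)
    also have "\<dots> \<le> 2 * (cS * Em * \<epsilon> ^ 3 * M\<^sup>2 / np) + cS * (Em * \<epsilon>\<^sup>2) * \<omega>"
      using nn mult_right_mono[OF _ nn, of "1/4" 2] by simp
    also have "\<dots> = cS * (2 * (Em * \<epsilon> ^ 3) * M\<^sup>2 / np + (Em * \<epsilon>\<^sup>2) * \<omega>)"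
      by (simp add: field_simps)
    finally show ?thesis .
  qed
  have main: "\<bar>cS * Em * (1/2) * A - (LINT t:{0<..\<epsilon>}|mu_s s. L t)\<bar>
      \<le> cS * (2 * \<epsilon> powr (3 - 2 * s) * M\<^sup>2 / np + \<epsilon> powr (2 - 2 * s) * \<omega>)"
    unfolding split E2 E3 using t1 t2 fin abs_triangle_ineq[of "cS * Em * (1/2) * (A - \<epsilon>\<^sup>2 * a)" "a * K - (LINT t:{0<..\<epsilon>}|mu_s s. L t)"]
    by linarith
  show "\<bar>c_s s * s * \<epsilon> powr (-2 * s) * (1/2) *
        (Sup (\<phi> ` ball x \<epsilon>) + Inf (\<phi> ` ball x \<epsilon>) - 2 * \<phi> x)
      - (LINT t:{0<..\<epsilon>}|mu_s s.
           L_phi \<phi> x (t *\<^sub>R (g x /\<^sub>R norm (g x))) (t *\<^sub>R (g x /\<^sub>R norm (g x))))\<bar>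
    \<le> c_s s * s * (2 * \<epsilon> powr (3 - 2 * s) * (mat_opnorm (H x))\<^sup>2 / norm (g x)
         + \<epsilon> powr (2 - 2 * s) * Sup ((\<lambda>y. mat_opnorm (H y - H x)) ` ball x \<epsilon>))"
    using main by (simp only: cS_def Em_def A_def \<Phi>_def L_def u_def np_def p_def M_def \<omega>_def \<Omega>_def)

qed

end
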